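(* Let $k \ge 1$, $r \ge 0$ and $m \in [0,k]$ be integers, let $\mathcal{P} \subseteq \mathcal{X}$ be a finite point set, and let $\mathcal{U}, \mathcal{V} \subseteq \mathcal{X}$ be sets of centers with $|\mathcal{U}| = k$ and $|\mathcal{V}| = k + r$. If the number of well-separated pairs with respect to $(\mathcal{U},\mathcal{V})$ is $k - m$, then there exists a subset $\tilde{\mathcal{U}} \subseteq \mathcal{U}$ of size at most $k - \lfloor (m-r)/4 \rfloor$ such that $\mathrm{cost}(\tilde{\mathcal{U}}, \mathcal{P}) \le 6\gamma \cdot \bigl(\mathrm{cost}(\mathcal{U},\mathcal{P}) + \mathrm{cost}(\mathcal{V},\mathcal{P})\bigr)$.
   Context: $(\mathcal{X}, d)$ is a metric space. For $\mathcal{W} \subseteq \mathcal{X}$ and $p \in \mathcal{X}$, $d(p,\mathcal{W}) = \min_{q \in \mathcal{W}} d(p,q)$, and $\mathrm{cost}(\mathcal{W},\mathcal{P}) = \sum_{p \in \mathcal{P}} d(p,\mathcal{W})$. The constant $\gamma$ equals $4000$. For $\mathcal{U},\mathcal{V} \subseteq \mathcal{X}$, a pair $(u,v) \in \mathcal{U} \times \mathcal{V}$ is well-separated with respect to $(\mathcal{U},\mathcal{V})$ if $d(u, \mathcal{U} \setminus \{u\}) \ge \gamma \cdot d(u,v)$ and $d(v, \mathcal{V} \setminus \{v\}) \ge \gamma \cdot d(u,v)$. *)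

theory Defs
  imports "HOL-Analysis.Analysis"
begin

definition gamma :: real where "gamma = 4000"

definition dist_set :: "'a::metric_space \<Rightarrow> 'a set \<Rightarrow> real" where
  "dist_set p W = Min ((\<lambda>q. dist p q) ` W)"

definition cost :: "'a::metric_space set \<Rightarrow> 'a set \<Rightarrow> real" where
  "cost W P = (\<Sum>p\<in>P. dist_set p W)"

text \<open>The condition d(u, U - {u}) >= gamma * d(u,v) is written
  as a statement about every other element of U (so it holds vacuously when
  U - {u} is empty, i.e. distance to the empty set is +infinity).\<close>
definition well_separated :: "'a::metric_space set \<Rightarrow> 'a set \<Rightarrow> 'a \<Rightarrow> 'a \<Rightarrow> bool" where
  "well_separated U V u v \<longleftrightarrow> u \<in> U \<and> v \<in> V \<and>
     (\<forall>u'\<in>U - {u}. dist u u' \<ge> gamma * dist u v) \<and>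
     (\<forall>v'\<in>V - {v}. dist v v' \<ge> gamma * dist u v)"

definition num_well_separated :: "'a::metric_space set \<Rightarrow> 'a set \<Rightarrow> nat" where
  "num_well_separated U V = card {(u, v). u \<in> U \<and> v \<in> V \<and> well_separated U V u v}"

end

theory Submission
  imports Defs
begin

lemma sep_cover_exists:
  fixes T :: "'a::metric_space set" and f :: "'a \<Rightarrow> real" and K :: real
  assumes "finite T" and K: "K \<ge> 0" and fpos: "\<And>t. t \<in> T \<Longrightarrow> f t \<ge> 0"
  shows "\<exists>S\<subseteq>T. (\<forall>s1\<in>S. \<forall>s2\<in>S. s1 \<noteq> s2 \<longrightarrow> dist s1 s2 > K * max (f s1) (f s2))
              \<and> (\<forall>t\<in>T. \<exists>s\<in>S. dist t s \<le> K * f t)"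
  using assms(1) fpos
proof (induction T rule: finite_ranking_induct[where f=f])
  case empty
  then show ?case by auto
next
  case (insert x T)
  have pr: "\<And>t. t \<in> T \<Longrightarrow> 0 \<le> f t" using insert.prems by simp
  obtain S where S: "S \<subseteq> T" "\<forall>s1\<in>S. \<forall>s2\<in>S. s1 \<noteq> s2 \<longrightarrow> dist s1 s2 > K * max (f s1) (f s2)"
     "\<forall>t\<in>T. \<exists>s\<in>S. dist t s \<le> K * f t" using insert.IH[OF pr] by blast
  show ?case
  proof (cases "\<exists>s\<in>S. dist x s \<le> K * f x")
    case True
    have c: "\<forall>t\<in>insert x T. \<exists>s\<in>S. dist t s \<le> K * f t" using S(3) True by simp
    have "S \<subseteq> insert x T" using S(1) by (rule subset_insertI2)
    then show ?thesis using S(2) c by (intro exI[of _ S] conjI)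
  next
    case False
    have fx: "f x \<ge> 0" using insert.prems by simp
    have "\<forall>s1\<in>insert x S. \<forall>s2\<in>insert x S. s1 \<noteq> s2 \<longrightarrow> dist s1 s2 > K * max (f s1) (f s2)"
    proof (intro ballI impI)
      fix s1 s2 assume a: "s1 \<in> insert x S" "s2 \<in> insert x S" "s1 \<noteq> s2"
      show "dist s1 s2 > K * max (f s1) (f s2)"
      proof (cases "s1 = x")
        case True
        then have "s2 \<in> S" using a by auto
        then have "f s2 \<le> f x" using S(1) insert by auto
        then show ?thesis using False \<open>s2 \<in> S\<close> True by (auto simp: max_def)
      next
        case F1: False
        show ?thesis
        proof (cases "s2 = x")
          case True
          then have "s1 \<in> S" using a F1 by auto
          then have "f s1 \<le> f x" using S(1) insert by auto
          then show ?thesis using False \<open>s1 \<in> S\<close> True by (auto simp: max_def dist_commute)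
        next
          case False
          then show ?thesis using a F1 S(2) by auto
        qed
      qed
    qed
    moreover have "\<forall>t\<in>insert x T. \<exists>s\<in>insert x S. dist t s \<le> K * f t"
      using S(3) K fx by auto
    moreover have "insert x S \<subseteq> insert x T" using S(1) by (rule insert_mono)
    ultimately show ?thesis by (intro exI[of _ "insert x S"] conjI)
  qed
qed

lemma dist_set_le:
  assumes "finite W" "q \<in> W" shows "dist_set p W \<le> dist p q"
  unfolding dist_set_def using assms by (intro Min_le) auto

lemma dist_set_attained:
  assumes "finite W" "W \<noteq> {}" shows "\<exists>q\<in>W. dist_set p W = dist p q"
proof -
  have "Min ((\<lambda>q. dist p q) ` W) \<in> (\<lambda>q. dist p q) ` W" using assms by (intro Min_in) auto
  then show ?thesis unfolding dist_set_def by auto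
qed

lemma dist_set_nonneg:
  assumes "finite W" "W \<noteq> {}" shows "dist_set p W \<ge> 0"
  using dist_set_attained[OF assms, of p] by auto

lemma maxbound:
  fixes a b x c K :: real
  assumes "0 \<le> a" "0 \<le> b" "x \<le> c*a + c*b" "0 \<le> c" "2*c \<le> K"
  shows "x \<le> K * max a b"
proof -
  have "c*a \<le> c*max a b" using assms by (intro mult_left_mono) auto
  moreover have "c*b \<le> c*max a b" using assms by (intro mult_left_mono) auto
  moreover have "(2*c)*max a b \<le> K*max a b" using assms by (intro mult_right_mono) auto
  ultimately show ?thesis using assms by linarith
qed

theorem lemma4p2:
  fixes P U V :: "'a::metric_space set" and k r m :: nat
  assumes "k \<ge> 1" and "m \<le> k"
    and "finite P"
    and "finite U" and "card U = k"
    and "finite V" and "card V = k + r"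
    and "num_well_separated U V = k - m"
  shows "\<exists>U'. U' \<subseteq> U \<and> U' \<noteq> {} \<and>
           int (card U') \<le> int k - \<lfloor>(real m - real r) / 4\<rfloor> \<and>
           cost U' P \<le> 6 * gamma * (cost U P + cost V P)"
proof -
  define K :: real where "K = 2 * gamma + 2"
  define \<delta> where "\<delta> = (\<lambda>u. dist_set u V)"
  have Une: "U \<noteq> {}" using assms by auto
  have Vne: "V \<noteq> {}" using assms by auto
  have K0: "K \<ge> 0" unfolding K_def gamma_def by simp
  have d0: "\<And>u. \<delta> u \<ge> 0" unfolding \<delta>_def using dist_set_nonneg[OF assms(6) Vne] by auto
  obtain S where S: "S \<subseteq> U" and sep: "\<forall>s1\<in>S. \<forall>s2\<in>S. s1 \<noteq> s2 \<longrightarrow> dist s1 s2 > K * max (\<delta> s1) (\<delta> s2)"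
    and cov: "\<forall>t\<in>U. \<exists>s\<in>S. dist t s \<le> K * \<delta> t"
    using sep_cover_exists[OF assms(4) K0, of \<delta>] d0 by blast
  have finS: "finite S" using S assms(4) finite_subset by auto
  have Sne: "S \<noteq> {}" using cov Une by auto
  have costb: "cost S P \<le> (K + 1) * (cost U P + cost V P)"
  proof -
    have "dist_set p S \<le> (K + 1) * (dist_set p U + dist_set p V)" for p
    proof -
      obtain u where u: "u \<in> U" "dist_set p U = dist p u" using dist_set_attained[OF assms(4) Une] by blast
      obtain v where v: "v \<in> V" "dist_set p V = dist p v" using dist_set_attained[OF assms(6) Vne] by blast
      obtain s where s: "s \<in> S" "dist u s \<le> K * \<delta> u" using cov u by blast
      have "\<delta> u \<le> dist u v" unfolding \<delta>_def using dist_set_le[OF assms(6) v(1)] .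
      also have "\<dots> \<le> dist p u + dist p v" using dist_triangle[of u v p] by (simp add: dist_commute)
      finally have du: "\<delta> u \<le> dist_set p U + dist_set p V" using u v by simp
      have "dist_set p S \<le> dist p s" using dist_set_le[OF finS s(1)] .
      also have "\<dots> \<le> dist p u + dist u s" by (rule dist_triangle)
      also have "\<dots> \<le> dist_set p U + K * (dist_set p U + dist_set p V)"
        using u s(2) mult_left_mono[OF du K0] by simp
      also have "\<dots> \<le> (K + 1) * (dist_set p U + dist_set p V)"
        using dist_set_nonneg[OF assms(6) Vne, of p] K0 by (simp add: algebra_simps)
      finally show ?thesis .
    qed
    then have "cost S P \<le> (\<Sum>p\<in>P. (K + 1) * (dist_set p U + dist_set p V))"
      unfolding cost_def by (intro sum_mono) auto
    also have "\<dots> = (K + 1) * (cost U P + cost V P)"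
      unfolding cost_def by (simp only: sum.distrib[symmetric] sum_distrib_left)
    finally show ?thesis .
  qed
  have cUV: "cost U P + cost V P \<ge> 0"
    unfolding cost_def using dist_set_nonneg[OF assms(4) Une] dist_set_nonneg[OF assms(6) Vne]
    by (intro add_nonneg_nonneg sum_nonneg) auto
  have costb2: "cost S P \<le> 6 * gamma * (cost U P + cost V P)"
  proof -
    have "K + 1 \<le> 6 * gamma" unfolding K_def gamma_def by simp
    from mult_right_mono[OF this cUV] costb show ?thesis by linarith
  qed
  have "\<forall>s\<in>S. \<exists>v\<in>V. \<delta> s = dist s v" unfolding \<delta>_def using dist_set_attained[OF assms(6) Vne] by blast
  then obtain nv where nv: "\<And>s. s \<in> S \<Longrightarrow> nv s \<in> V \<and> \<delta> s = dist s (nv s)" by metis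
  have sepD: "\<And>s1 s2. s1 \<in> S \<Longrightarrow> s2 \<in> S \<Longrightarrow> dist s1 s2 \<le> K * max (\<delta> s1) (\<delta> s2) \<Longrightarrow> s1 = s2"
    using sep by force
  have Kg: "K = 2 * gamma + 2" "gamma > 0" unfolding K_def gamma_def by auto
  have inj_nv: "inj_on nv S"
  proof (rule inj_onI)
    fix s1 s2 assume a: "s1 \<in> S" "s2 \<in> S" "nv s1 = nv s2"
    have "dist s1 s2 \<le> dist s1 (nv s1) + dist s2 (nv s2)"
      using dist_triangle[of s1 s2 "nv s1"] a(3) by (simp add: dist_commute)
    also have "\<dots> \<le> K * max (\<delta> s1) (\<delta> s2)"
      using nv[OF a(1)] nv[OF a(2)] Kg d0[of s1] d0[of s2]
          by (intro maxbound[where c="1"]) (use Kg in \<open>auto simp: gamma_def dist_commute\<close>)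
    finally show "s1 = s2" using sepD a by blast
  qed
  define W where "W = {(u, v). u \<in> U \<and> v \<in> V \<and> well_separated U V u v}"
  have finW: "finite W" unfolding W_def
    by (rule finite_subset[of _ "U \<times> V"]) (use assms in auto)
  have cardW: "card W = k - m" using assms(8) unfolding W_def num_well_separated_def by simp
  define S1 where "S1 = {s\<in>S. well_separated U V s (nv s)}"
  define S2 where "S2 = S - S1"
  have cS1: "card S1 \<le> k - m"
  proof -
    have "inj_on (\<lambda>s. (s, nv s)) S1" by (rule inj_onI) auto
    moreover have "(\<lambda>s. (s, nv s)) ` S1 \<subseteq> W" unfolding W_def S1_def using S nv by auto
    ultimately have "card S1 \<le> card W" using finW card_inj_on_le by blast
    then show ?thesis using cardW by simp
  qed
  have charge: "\<forall>s\<in>S2. (\<exists>u'\<in>U - {s}. dist s u' < gamma * \<delta> s) \<or> (\<exists>v'\<in>V - {nv s}. dist (nv s) v' < gamma * \<delta> s)"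
  proof
    fix s assume "s \<in> S2"
    then have "s \<in> S" "\<not> well_separated U V s (nv s)" unfolding S2_def S1_def by auto
    then show "(\<exists>u'\<in>U - {s}. dist s u' < gamma * \<delta> s) \<or> (\<exists>v'\<in>V - {nv s}. dist (nv s) v' < gamma * \<delta> s)"
      using nv[of s] S unfolding well_separated_def by (auto simp: not_le)
  qed
  define ch where "ch = (\<lambda>s. if (\<exists>u'\<in>U - {s}. dist s u' < gamma * \<delta> s)
      then Inl (SOME u'. u' \<in> U - {s} \<and> dist s u' < gamma * \<delta> s)
      else Inr (SOME v'. v' \<in> V - {nv s} \<and> dist (nv s) v' < gamma * \<delta> s))"
  have chL: "\<And>s u. s \<in> S2 \<Longrightarrow> ch s = Inl u \<Longrightarrow> u \<in> U - {s} \<and> dist s u < gamma * \<delta> s"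
  proof -
    fix s u assume a: "s \<in> S2" "ch s = Inl u"
    then have e: "\<exists>u'\<in>U - {s}. dist s u' < gamma * \<delta> s" unfolding ch_def by (auto split: if_splits)
    then have "u = (SOME u'. u' \<in> U - {s} \<and> dist s u' < gamma * \<delta> s)" using a unfolding ch_def by auto
    then show "u \<in> U - {s} \<and> dist s u < gamma * \<delta> s" using someI_ex[of "\<lambda>u'. u' \<in> U - {s} \<and> dist s u' < gamma * \<delta> s"] e by auto
  qed
  have chR: "\<And>s v. s \<in> S2 \<Longrightarrow> ch s = Inr v \<Longrightarrow> v \<in> V - {nv s} \<and> dist (nv s) v < gamma * \<delta> s"
  proof -
    fix s v assume a: "s \<in> S2" "ch s = Inr v"
    then have ne: "\<not> (\<exists>u'\<in>U - {s}. dist s u' < gamma * \<delta> s)" unfolding ch_def by (auto split: if_splits)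
    then have e: "\<exists>v'\<in>V - {nv s}. dist (nv s) v' < gamma * \<delta> s" using charge a by blast
    have "v = (SOME v'. v' \<in> V - {nv s} \<and> dist (nv s) v' < gamma * \<delta> s)" using a ne unfolding ch_def by auto
    then show "v \<in> V - {nv s} \<and> dist (nv s) v < gamma * \<delta> s" using someI_ex[of "\<lambda>v'. v' \<in> V - {nv s} \<and> dist (nv s) v' < gamma * \<delta> s"] e by auto
  qed
  have S2S: "S2 \<subseteq> S" unfolding S2_def by auto
  have ch_into: "ch ` S2 \<subseteq> (U - S) <+> (V - nv ` S)"
  proof
    fix y assume "y \<in> ch ` S2"
    then obtain s where s: "s \<in> S2" "y = ch s" by auto
    have sS: "s \<in> S" using s S2S by auto
    show "y \<in> (U - S) <+> (V - nv ` S)"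
    proof (cases y)
      case (Inl u)
      then have u: "u \<in> U - {s}" "dist s u < gamma * \<delta> s" using chL s by auto
      have "u \<notin> S"
      proof
        assume "u \<in> S"
        have "dist s u \<le> K * max (\<delta> s) (\<delta> u)"
          using u(2) Kg d0[of s] d0[of u]
          by (intro maxbound[where c="gamma"]) (use Kg in \<open>auto simp: gamma_def dist_commute\<close>)
        then show False using sepD[OF sS \<open>u \<in> S\<close>] u(1) by auto
      qed
      then show ?thesis using Inl u by auto
    next
      case (Inr v)
      then have v: "v \<in> V - {nv s}" "dist (nv s) v < gamma * \<delta> s" using chR s by auto
      have "v \<notin> nv ` S"
      proof
        assume "v \<in> nv ` S"
        then obtain s' where s': "s' \<in> S" "v = nv s'" by auto
        have ne: "s' \<noteq> s" using s' v by auto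
        have "dist s s' \<le> dist s (nv s) + dist (nv s) v + dist v s'"
          using dist_triangle[of s s' v] dist_triangle[of s v "nv s"] by linarith
        also have "\<dots> \<le> K * max (\<delta> s) (\<delta> s')"
        proof (rule maxbound[where c="gamma+1"])
          have h1: "\<delta> s = dist s (nv s)" using nv[OF sS] by simp
          have h2: "\<delta> s' = dist v s'" using nv[OF s'(1)] s'(2) by (simp add: dist_commute)
          show "dist s (nv s) + dist (nv s) v + dist v s' \<le> (gamma+1) * \<delta> s + (gamma+1) * \<delta> s'"
            using h1 h2 v(2) d0[of s] d0[of s'] unfolding gamma_def distrib_right mult_1_left by linarith
        qed (use d0 Kg in \<open>auto simp: gamma_def\<close>)
        finally show False using sepD[OF sS s'(1)] ne by auto
      qed
      then show ?thesis using Inr v by auto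
    qed
  qed
  have inj_ch: "inj_on ch S2"
  proof (rule inj_onI)
    fix s1 s2 assume a: "s1 \<in> S2" "s2 \<in> S2" "ch s1 = ch s2"
    have a1: "s1 \<in> S" "s2 \<in> S" using a S2S by auto
    show "s1 = s2"
    proof (cases "ch s1")
      case (Inl u)
      then have u1: "dist s1 u < gamma * \<delta> s1" and u2: "dist s2 u < gamma * \<delta> s2"
        using chL a by auto
      have "dist s1 s2 \<le> dist s1 u + dist s2 u" using dist_triangle[of s1 s2 u] by (simp add: dist_commute)
      also have "\<dots> \<le> K * max (\<delta> s1) (\<delta> s2)"
        using u1 u2 Kg d0[of s1] d0[of s2]
          by (intro maxbound[where c="gamma"]) (use Kg in \<open>auto simp: gamma_def dist_commute\<close>)
      finally show ?thesis using sepD a1 by blast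
    next
      case (Inr v)
      then have v1: "dist (nv s1) v < gamma * \<delta> s1" and v2: "dist (nv s2) v < gamma * \<delta> s2"
        using chR a by auto
      have "dist s1 s2 \<le> dist s1 (nv s1) + dist (nv s1) v + (dist s2 (nv s2) + dist (nv s2) v)"
        using dist_triangle[of s1 s2 v] dist_triangle[of s1 v "nv s1"] dist_triangle[of s2 v "nv s2"]
        by (simp add: dist_commute)
      also have "\<dots> \<le> K * max (\<delta> s1) (\<delta> s2)"
        using v1 v2 nv[OF a1(1)] nv[OF a1(2)] Kg d0[of s1] d0[of s2]
          by (intro maxbound[where c="gamma+1"]) (use Kg in \<open>auto simp: gamma_def dist_commute\<close>)
      finally show ?thesis using sepD a1 by blast
    qed
  qed
  have cS2: "card S2 \<le> card (U - S) + card (V - nv ` S)"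
  proof -
    have "card S2 \<le> card ((U - S) <+> (V - nv ` S))"
      using card_inj_on_le[OF inj_ch ch_into] assms(4,6) by auto
    also have "\<dots> = card (U - S) + card (V - nv ` S)"
      using assms(4,6) by (simp add: card_Plus)
    finally show ?thesis .
  qed
  have c1: "card (U - S) = k - card S" using card_Diff_subset[OF finS S] assms by simp
  have c2: "card (V - nv ` S) = k + r - card S"
  proof -
    have "nv ` S \<subseteq> V" using nv by auto
    then have "card (V - nv ` S) = card V - card (nv ` S)" by (rule card_Diff_subset[OF finite_imageI[OF finS]])
    then show ?thesis using card_image[OF inj_nv] assms by simp
  qed
  have cS: "card S = card S1 + card S2"
  proof -
    have sub: "S1 \<subseteq> S" unfolding S1_def by auto
    have "card S2 = card S - card S1" unfolding S2_def by (rule card_Diff_subset[OF finite_subset[OF sub finS] sub])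
    moreover have "card S1 \<le> card S" by (rule card_mono[OF finS sub])
    ultimately show ?thesis by simp
  qed
  have cSU: "card S \<le> k" using card_mono[OF assms(4) S] assms by simp
  have key: "3 * int (card S) \<le> 3 * int k - int m + int r"
    using cS cS1 cS2 c1 c2 cSU assms(2) by linarith
  define q where "q = (real m - real r) / 4"
  have q4: "4 * q = real m - real r" unfolding q_def by simp
  have A: "real (card S) \<le> real k - q"
  proof (cases "m \<ge> r")
    case True
    have "3 * real (card S) \<le> 3 * real k - real m + real r" using key by linarith
    moreover have "real r \<le> real m" using True by simp
    ultimately show ?thesis using q4 by linarith
  next
    case False
    then have "real m < real r" by simp
    moreover have "real (card S) \<le> real k" using cSU by simp
    ultimately show ?thesis using q4 by linarith
  qed
  have fq: "real_of_int \<lfloor>q\<rfloor> \<le> q" by (rule of_int_floor_le)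
  have "real_of_int (int (card S) + \<lfloor>q\<rfloor>) = real (card S) + real_of_int \<lfloor>q\<rfloor>" by simp
  also have "\<dots> \<le> real_of_int (int k)" using A fq by linarith
  finally have "int (card S) + \<lfloor>q\<rfloor> \<le> int k" by (simp only: of_int_le_iff)
  then have cardb: "int (card S) \<le> int k - \<lfloor>(real m - real r) / 4\<rfloor>" unfolding q_def by simp
  show ?thesis using S Sne cardb costb2 by blast
qed

end
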